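(* Let $p:\mathbb{R}\times\mathbb{R}\to\mathbb{R}$ be measurable with: (1) $p_{\alpha,\beta}>0$ almost everywhere; (2) $p_{\alpha,\beta}=p_{\beta,\alpha}$; (3) $p_{\alpha,\beta}$ is $\pi$-periodic in both arguments; (4) $p$ is essentially bounded. If $(\gamma_n)$ is a sequence in $L^\infty([0,\pi),\mathbb{R}^2)$ converging in the weak-star topology to $\gamma$ (i.e. each coordinate function converges weak-star in $L^\infty([0,\pi))=L^1([0,\pi))^*$), then $\lim_{n\to\infty}\omega_p(\gamma_n)=\omega_p(\gamma)$.
   Context: For $v,w\in\mathbb{R}^2$, $v\times w=v_1w_2-v_2w_1$. For $\gamma\in L^\infty([0,\pi),\mathbb{R}^2)$, \[ \omega_p(\gamma)=\int_0^\pi\int_\alpha^\pi p_{\alpha,\beta}\,\gamma(\alpha)\times\gamma(\beta)\,d\beta\,d\alpha. \] *)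

theory Defs
  imports "HOL-Analysis.Analysis"
begin

definition cross2 :: "real \<times> real \<Rightarrow> real \<times> real \<Rightarrow> real" where
  "cross2 v w = fst v * snd w - snd v * fst w"

definition Linf_0pi :: "(real \<Rightarrow> 'b::real_normed_vector) \<Rightarrow> bool" where
  "Linf_0pi g \<longleftrightarrow> set_borel_measurable lebesgue {0..<pi} g \<and>
     (\<exists>C. AE x in lebesgue. x \<in> {0..<pi} \<longrightarrow> norm (g x) \<le> C)"

definition weak_star_conv_0pi :: "(nat \<Rightarrow> real \<Rightarrow> real) \<Rightarrow> (real \<Rightarrow> real) \<Rightarrow> bool" where
  "weak_star_conv_0pi gs g \<longleftrightarrow>
     (\<forall>f. set_integrable lebesgue {0..<pi} f \<longrightarrow>
        (\<lambda>n. LINT x:{0..<pi}|lebesgue. gs n x * f x) \<longlonglongrightarrow> (LINT x:{0..<pi}|lebesgue. g x * f x))"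

definition omega_p :: "(real \<Rightarrow> real \<Rightarrow> real) \<Rightarrow> (real \<Rightarrow> real \<times> real) \<Rightarrow> real" where
  "omega_p p \<gamma> = (LINT \<alpha>:{0..<pi}|lebesgue. (LINT \<beta>:{\<alpha>..<pi}|lebesgue. p \<alpha> \<beta> * cross2 (\<gamma> \<alpha>) (\<gamma> \<beta>)))"

end

theory Submission
  imports Defs
begin

lemma sf_lebesgue: "sigma_finite_measure (lebesgue :: 'a::euclidean_space measure)"
proof -
  obtain A :: "'a set set" where A: "countable A" "A \<subseteq> sets lborel" "\<Union>A = space lborel" "\<forall>a\<in>A. emeasure lborel a \<noteq> \<infinity>"
    using sigma_finite_measure.sigma_finite_countable[OF lborel.sigma_finite_measure_axioms] by blast
  show ?thesis
    apply (rule sigma_finite_measure.intro)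
    apply (rule exI[of _ A])
    using A by (auto simp: subset_eq)
qed

lemma summable_AE_norm:
  fixes k :: "nat \<Rightarrow> 'a \<Rightarrow> real"
  assumes int: "\<And>i. integrable M (k i)" and sm: "summable (\<lambda>i. \<integral>x. \<bar>k i x\<bar> \<partial>M)"
  shows "AE x in M. summable (\<lambda>i. \<bar>k i x\<bar>)"
proof -
  have meas[measurable]: "\<And>i. k i \<in> borel_measurable M" using int by auto
  have "(\<integral>\<^sup>+x. (\<Sum>i. ennreal \<bar>k i x\<bar>) \<partial>M) = (\<Sum>i. \<integral>\<^sup>+x. ennreal \<bar>k i x\<bar> \<partial>M)"
    by (intro nn_integral_suminf) auto
  also have "\<dots> = (\<Sum>i. ennreal (\<integral>x. \<bar>k i x\<bar> \<partial>M))"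
    by (intro arg_cong[where f=suminf] ext nn_integral_eq_integral) (auto intro: int)
  also have "\<dots> \<noteq> \<infinity>"
    using sm by (simp add: ennreal_suminf_neq_top)
  finally have "AE x in M. (\<Sum>i. ennreal \<bar>k i x\<bar>) \<noteq> \<infinity>"
    by (intro nn_integral_PInf_AE) auto
  then show ?thesis
    by eventually_elim (auto intro: summable_suminf_not_top)
qed

lemma integrable_bdd_mult:
  fixes g h :: "'a \<Rightarrow> real"
  assumes g: "g \<in> borel_measurable M" and B: "AE x in M. \<bar>g x\<bar> \<le> B" and h: "integrable M h"
  shows "integrable M (\<lambda>x. g x * h x)"
proof (rule Bochner_Integration.integrable_bound[where f="\<lambda>x. B * h x"])
  show "integrable M (\<lambda>x. B * h x)" using h by auto
  show "(\<lambda>x. g x * h x) \<in> borel_measurable M" using g h by auto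
  show "AE x in M. norm (g x * h x) \<le> norm (B * h x)"
    using B by eventually_elim (auto simp: abs_mult intro: mult_right_mono)
qed

lemma dual_bound:
  fixes g h :: "'a \<Rightarrow> real"
  assumes g: "g \<in> borel_measurable M" and B: "AE x in M. \<bar>g x\<bar> \<le> B" and h: "integrable M h"
  shows "\<bar>\<integral>x. g x * h x \<partial>M\<bar> \<le> B * (\<integral>x. \<bar>h x\<bar> \<partial>M)"
proof -
  have i: "integrable M (\<lambda>x. g x * h x)" by (rule integrable_bdd_mult[OF g B h])
  have "\<bar>\<integral>x. g x * h x \<partial>M\<bar> \<le> (\<integral>x. \<bar>g x * h x\<bar> \<partial>M)"
    by (rule integral_abs_bound)
  also have "\<dots> \<le> (\<integral>x. B * \<bar>h x\<bar> \<partial>M)"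
    using integrable_abs[OF i] h B by (intro integral_mono_AE) (auto simp: abs_mult intro: mult_right_mono elim!: eventually_mono)
  also have "\<dots> = B * (\<integral>x. \<bar>h x\<bar> \<partial>M)" by simp
  finally show ?thesis .
qed


lemma norming:
  fixes g :: "'a \<Rightarrow> real"
  assumes S[measurable]: "S \<in> sets M" and Sfin: "emeasure M S < \<infinity>" and g[measurable]: "g \<in> borel_measurable M" and B: "AE x in M. \<bar>g x\<bar> \<le> B"
   and zero: "\<forall>x\<in>space M. x \<notin> S \<longrightarrow> g x = 0"
   and c: "c \<ge> 0" and nae: "\<not> (AE x in M. \<bar>g x\<bar> \<le> c)"
  shows "\<exists>h. integrable M h \<and> (\<integral>x. \<bar>h x\<bar> \<partial>M) \<le> 1 \<and> c \<le> (\<integral>x. g x * h x \<partial>M)"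
proof -
  define A where "A = {x\<in>space M. c < \<bar>g x\<bar>}"
  have A[measurable]: "A \<in> sets M" unfolding A_def by measurable
  have AS: "A \<subseteq> S" using zero c by (auto simp: A_def)
  have fin: "emeasure M A < \<infinity>" using emeasure_mono[OF AS S] Sfin by (meson le_less_trans)
  have ne: "emeasure M A \<noteq> 0"
  proof
    assume "emeasure M A = 0"
    then have "A \<in> null_sets M" by auto
    then have "AE x in M. \<bar>g x\<bar> \<le> c" by (rule AE_I') (auto simp: A_def)
    then show False using nae by simp
  qed
  define m where "m = measure M A"
  have em: "emeasure M A = ennreal m" using fin by (simp add: m_def emeasure_eq_ennreal_measure)
  have m: "m > 0" using ne em by (metis ennreal_0 measure_nonneg m_def order_le_less)
  define h where "h x = indicator A x * sgn (g x) / m" for x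
  have hm[measurable]: "h \<in> borel_measurable M" unfolding h_def by measurable
  have hi: "integrable M h"
  proof (rule integrableI_bounded_set[where A=A and B="1/m"])
    show "AE x in M. x \<in> A \<longrightarrow> norm (h x) \<le> 1 / m"
      using m by (auto simp: h_def abs_sgn indicator_def divide_right_mono)
    show "AE x in M. x \<notin> A \<longrightarrow> h x = 0" by (auto simp: h_def)
  qed (use fin in auto)
  have habs: "\<bar>h x\<bar> = indicator A x / m" if "x \<in> space M" for x
    using m c that by (auto simp: h_def A_def indicator_def abs_sgn)
  have "(\<integral>x. \<bar>h x\<bar> \<partial>M) = (\<integral>x. indicator A x / m \<partial>M)"
    by (rule Bochner_Integration.integral_cong) (auto simp: habs)
  also have "\<dots> = m / m" using fin by (simp add: m_def)
  also have "\<dots> = 1" using m by simp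
  finally have h1: "(\<integral>x. \<bar>h x\<bar> \<partial>M) \<le> 1" by simp
  have ghi: "integrable M (\<lambda>x. g x * h x)" by (rule integrable_bdd_mult[OF g B hi])
  have gh: "g x * h x = indicator A x * \<bar>g x\<bar> / m" for x
    by (auto simp: h_def indicator_def abs_sgn)
  have "(\<integral>x. indicator A x * c / m \<partial>M) \<le> (\<integral>x. g x * h x \<partial>M)"
  proof (rule integral_mono)
    show "integrable M (\<lambda>x. indicator A x * c / m)" using fin by (auto intro!: integrable_real_mult_indicator)
    show "integrable M (\<lambda>x. g x * h x)" by (rule ghi)
    show "indicator A x * c / m \<le> g x * h x" if "x \<in> space M" for x
      using m that by (auto simp: gh A_def indicator_def divide_right_mono)
  qed
  also have "(\<integral>x. indicator A x * c / m \<partial>M) = c"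
    using fin m by (simp add: m_def)
  finally show ?thesis using hi h1 by blast
qed

lemma series_pair:
  fixes g :: "'a \<Rightarrow> real" and k :: "nat \<Rightarrow> 'a \<Rightarrow> real"
  assumes g: "g \<in> borel_measurable M" and B: "AE x in M. \<bar>g x\<bar> \<le> B"
    and int: "\<And>i. integrable M (k i)" and sm: "summable (\<lambda>i. \<integral>x. \<bar>k i x\<bar> \<partial>M)"
  shows "integrable M (\<lambda>x. \<Sum>i. k i x)"
    and "(\<lambda>i. \<integral>x. g x * k i x \<partial>M) sums (\<integral>x. g x * (\<Sum>i. k i x) \<partial>M)"
proof -
  have ae: "AE x in M. summable (\<lambda>i. \<bar>k i x\<bar>)" by (rule summable_AE_norm[OF int sm])
  show I: "integrable M (\<lambda>x. \<Sum>i. k i x)"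
    by (rule integrable_suminf[OF int]) (use ae sm in \<open>simp_all add: real_norm_def\<close>)
  have B': "AE x in M. \<bar>g x\<bar> \<le> \<bar>B\<bar>" using B by eventually_elim auto
  have int2: "\<And>i. integrable M (\<lambda>x. g x * k i x)" by (rule integrable_bdd_mult[OF g B' int])
  have ae2: "AE x in M. summable (\<lambda>i. norm (g x * k i x))"
    using ae by eventually_elim (auto simp: abs_mult intro: summable_mult)
  have sm2: "summable (\<lambda>i. \<integral>x. norm (g x * k i x) \<partial>M)"
  proof (rule summable_comparison_test[OF _ summable_mult[OF sm, of "\<bar>B\<bar>"]])
    show "\<exists>N. \<forall>n\<ge>N. norm (\<integral>x. norm (g x * k n x) \<partial>M) \<le> \<bar>B\<bar> * (\<integral>x. \<bar>k n x\<bar> \<partial>M)"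
    proof (intro exI allI impI)
      fix n
      have "(\<integral>x. norm (g x * k n x) \<partial>M) \<le> \<bar>B\<bar> * (\<integral>x. \<bar>k n x\<bar> \<partial>M)"
      proof -
        have "(\<integral>x. norm (g x * k n x) \<partial>M) \<le> (\<integral>x. \<bar>B\<bar> * \<bar>k n x\<bar> \<partial>M)"
          using B' integrable_abs[OF int2[of n]] int[of n]
          by (intro integral_mono_AE) (auto simp: abs_mult intro: mult_right_mono elim!: eventually_mono)
        then show ?thesis by simp
      qed
      then show "norm (\<integral>x. norm (g x * k n x) \<partial>M) \<le> \<bar>B\<bar> * (\<integral>x. \<bar>k n x\<bar> \<partial>M)"
        by simp
    qed
  qed
  have "(\<lambda>i. \<integral>x. g x * k i x \<partial>M) sums (\<integral>x. (\<Sum>i. g x * k i x) \<partial>M)"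
    by (rule sums_integral[OF int2 ae2 sm2])
  also have "(\<integral>x. (\<Sum>i. g x * k i x) \<partial>M) = (\<integral>x. g x * (\<Sum>i. k i x) \<partial>M)"
  proof (rule integral_cong_AE)
    show "(\<lambda>x. \<Sum>i. g x * k i x) \<in> borel_measurable M"
      using integrable_suminf[OF int2 ae2 sm2] by auto
    show "(\<lambda>x. g x * (\<Sum>i. k i x)) \<in> borel_measurable M" using I g by auto
    show "AE x in M. (\<Sum>i. g x * k i x) = g x * (\<Sum>i. k i x)"
      using ae by eventually_elim (auto intro!: suminf_mult summable_rabs_cancel)
  qed
  finally show "(\<lambda>i. \<integral>x. g x * k i x \<partial>M) sums (\<integral>x. g x * (\<Sum>i. k i x) \<partial>M)" .
qed

lemma unif_bound:
  fixes f :: "nat \<Rightarrow> 'a \<Rightarrow> real"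
  assumes S: "S \<in> sets M" "emeasure M S < \<infinity>"
   and fm: "\<And>n. f n \<in> borel_measurable M"
   and fb: "\<And>n. \<exists>B. AE x in M. \<bar>f n x\<bar> \<le> B"
   and fz: "\<And>n. \<forall>x\<in>space M. x \<notin> S \<longrightarrow> f n x = 0"
   and bd: "\<And>h. integrable M h \<Longrightarrow> Bseq (\<lambda>n. \<integral>x. f n x * h x \<partial>M)"
  shows "\<exists>C. \<forall>n. AE x in M. \<bar>f n x\<bar> \<le> C"
proof (rule ccontr)
  assume nC: "\<not> ?thesis"
  obtain B0 where B0: "\<And>n. AE x in M. \<bar>f n x\<bar> \<le> B0 n" using fb by metis
  define Bf where "Bf n = max 1 (B0 n)" for n
  have Bf: "AE x in M. \<bar>f n x\<bar> \<le> Bf n" for n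
    using B0[of n] by eventually_elim (auto simp: Bf_def)
  have Bf1: "Bf n \<ge> 1" for n by (simp add: Bf_def)
  have "\<forall>c. \<exists>p. c \<ge> 0 \<longrightarrow> integrable M (snd p) \<and> (\<integral>x. \<bar>snd p x\<bar> \<partial>M) \<le> 1
           \<and> c \<le> (\<integral>x. f (fst p) x * snd p x \<partial>M)"
  proof (intro allI)
    fix c :: real
    show "\<exists>p. c \<ge> 0 \<longrightarrow> integrable M (snd p) \<and> (\<integral>x. \<bar>snd p x\<bar> \<partial>M) \<le> 1
           \<and> c \<le> (\<integral>x. f (fst p) x * snd p x \<partial>M)"
    proof (cases "c \<ge> 0")
      case True
      from nC obtain n where n: "\<not> (AE x in M. \<bar>f n x\<bar> \<le> c)" by blast
      from norming[OF S fm[of n] Bf[of n] fz[of n] True n] obtain h where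
        "integrable M h \<and> (\<integral>x. \<bar>h x\<bar> \<partial>M) \<le> 1 \<and> c \<le> (\<integral>x. f n x * h x \<partial>M)" by blast
      then show ?thesis by (intro exI[of _ "(n, h)"]) auto
    qed auto
  qed
  then obtain W where W: "\<And>c. c \<ge> 0 \<Longrightarrow> integrable M (snd (W c)) \<and> (\<integral>x. \<bar>snd (W c) x\<bar> \<partial>M) \<le> 1
           \<and> c \<le> (\<integral>x. f (fst (W c)) x * snd (W c) x \<partial>M)" by metis
  define T where "T n h = (\<integral>x. f n x * h x \<partial>M)" for n h
  define st where "st = rec_nat (1::real, \<lambda>x::'a. 0::real)
     (\<lambda>k p. (max (fst p) (Bf (fst (W (real (k+3) / ((1/2)^Suc k / fst p))))),
        \<lambda>x. snd p x + ((1/2)^Suc k / fst p) *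
            (if T (fst (W (real (k+3) / ((1/2)^Suc k / fst p)))) (snd p) \<ge> 0 then 1 else -1) *
            snd (W (real (k+3) / ((1/2)^Suc k / fst p))) x))"
  define E where "E k = fst (st k)" for k
  define s where "s k = snd (st k)" for k
  define eps where "eps k = (1/2)^Suc k / E k" for k
  define cc where "cc k = real (k+3) / eps k" for k
  define nn where "nn k = fst (W (cc k))" for k
  define hh where "hh k = snd (W (cc k))" for k
  define sg where "sg k = (if T (nn k) (s k) \<ge> 0 then 1 else -1::real)" for k
  have st0: "E 0 = 1" "s 0 = (\<lambda>x. 0)" by (simp_all add: E_def s_def st_def)
  have stS: "E (Suc k) = max (E k) (Bf (nn k))" "s (Suc k) = (\<lambda>x. s k x + eps k * sg k * hh k x)" for k
    by (simp_all add: E_def s_def st_def[symmetric] eps_def cc_def nn_def hh_def sg_def, simp_all add: st_def)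
  have E1: "E k \<ge> 1" for k
    by (induction k) (auto simp: st0 stS)
  have Einc: "incseq E" by (rule incseq_SucI) (simp add: stS)
  have BE: "Bf (nn k) \<le> E i" if "k < i" for k i
  proof -
    have "Bf (nn k) \<le> E (Suc k)" by (simp add: stS)
    also have "\<dots> \<le> E i" using Einc that by (simp add: incseq_def)
    finally show ?thesis .
  qed
  have eps_pos: "eps k > 0" for k using E1[of k] by (simp add: eps_def)
  have eps_le: "eps k \<le> (1/2)^Suc k" for k
    using E1[of k] by (simp add: eps_def divide_le_eq)
  have cc0: "cc k \<ge> 0" for k using eps_pos[of k] by (simp add: cc_def)
  have hhi: "integrable M (hh k)" and hh1: "(\<integral>x. \<bar>hh k x\<bar> \<partial>M) \<le> 1"
    and hhc: "cc k \<le> T (nn k) (hh k)" for k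
    using W[OF cc0[of k]] by (auto simp: hh_def nn_def T_def)
  have sg1: "\<bar>sg k\<bar> = 1" for k by (simp add: sg_def)
  define tm where "tm i x = eps i * sg i * hh i x" for i x
  have tmi: "integrable M (tm i)" for i using hhi[of i] by (simp add: tm_def[abs_def])
  have tm1: "(\<integral>x. \<bar>tm i x\<bar> \<partial>M) \<le> eps i" for i
  proof -
    have "(\<integral>x. \<bar>tm i x\<bar> \<partial>M) = eps i * (\<integral>x. \<bar>hh i x\<bar> \<partial>M)"
      using eps_pos[of i] by (simp add: tm_def abs_mult sg1)
    also have "\<dots> \<le> eps i" using hh1[of i] eps_pos[of i] by (simp add: mult_left_le)
    finally show ?thesis .
  qed
  have tm2: "(\<integral>x. \<bar>tm i x\<bar> \<partial>M) \<le> (1/2)^Suc i" for i using tm1[of i] eps_le[of i] by linarith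
  have smtm: "summable (\<lambda>i. \<integral>x. \<bar>tm i x\<bar> \<partial>M)"
    by (rule summable_comparison_test[where g="\<lambda>i. (1/2)^Suc i"]) (use tm2 in auto)
  have s_sum: "s k = (\<lambda>x. \<Sum>i<k. tm i x)" for k
    by (induction k) (auto simp: st0 stS tm_def)
  define F where "F x = (\<Sum>i. tm i x)" for x
  have Fi: "integrable M F" unfolding F_def by (rule series_pair(1)[OF fm Bf tmi smtm])
  have Fs: "(\<lambda>i. T n (tm i)) sums T n F" for n
    unfolding T_def F_def by (rule series_pair(2)[OF fm Bf tmi smtm])
  obtain K where K: "\<And>n. \<bar>T n F\<bar> \<le> K"
    using bd[OF Fi] unfolding Bseq_def T_def by (metis real_norm_def less_imp_le)
  define k where "k = nat \<lceil>K\<rceil>"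
  have kK: "K \<le> real k" unfolding k_def by linarith
  define n where "n = nn k"
  have Tlin: "T n (\<lambda>x. \<Sum>i<j. tm i x) = (\<Sum>i<j. T n (tm i))" for j
  proof -
    have "T n (\<lambda>x. \<Sum>i<j. tm i x) = (\<integral>x. (\<Sum>i<j. f n x * tm i x) \<partial>M)"
      by (simp add: T_def sum_distrib_left)
    also have "\<dots> = (\<Sum>i<j. T n (tm i))"
      unfolding T_def by (rule Bochner_Integration.integral_sum) (rule integrable_bdd_mult[OF fm Bf tmi])
    finally show ?thesis .
  qed
  have split: "T n F = (\<Sum>j. T n (tm (j + Suc k))) + (\<Sum>i<Suc k. T n (tm i))"
  proof -
    have "summable (\<lambda>i. T n (tm i))" using Fs[of n] by (rule sums_summable)
    moreover have "T n F = (\<Sum>i. T n (tm i))" using Fs[of n] by (rule sums_unique)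
    ultimately show ?thesis using suminf_split_initial_segment[of "\<lambda>i. T n (tm i)" "Suc k"] by simp
  qed
  have head: "(\<Sum>i<Suc k. T n (tm i)) = (\<Sum>i<k. T n (tm i)) + eps k * sg k * T n (hh k)"
  proof -
    have "T n (tm k) = (\<integral>x. eps k * sg k * (f n x * hh k x) \<partial>M)"
      by (simp add: T_def tm_def mult.commute mult.left_commute)
    also have "\<dots> = eps k * sg k * T n (hh k)" by (simp add: T_def)
    finally have "T n (tm k) = eps k * sg k * T n (hh k)" .
    then show ?thesis by simp
  qed
  have hk: "\<bar>(\<Sum>i<Suc k. T n (tm i))\<bar> \<ge> real k + 3"
  proof -
    have sk: "(\<Sum>i<k. T n (tm i)) = T n (s k)" by (simp add: s_sum Tlin)
    have c: "eps k * T n (hh k) \<ge> real k + 3"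
    proof -
      have "eps k * T n (hh k) \<ge> eps k * cc k" using hhc[of k] eps_pos[of k] by (simp add: n_def)
      also have "eps k * cc k = real k + 3" using eps_pos[of k] by (simp add: cc_def)
      finally show ?thesis .
    qed
    have "0 < eps k * T n (hh k)" using c by linarith
    then have "T n (hh k) > 0" using eps_pos[of k] by (simp add: zero_less_mult_iff)
    show ?thesis
    proof (cases "T n (s k) \<ge> 0")
      case True
      then have "sg k = 1" by (simp add: sg_def n_def)
      then show ?thesis unfolding head sk using True c by simp
    next
      case False
      then have "sg k = -1" by (simp add: sg_def n_def)
      then show ?thesis unfolding head sk using False c by simp
    qed
  qed
  have tail_bd: "\<bar>T n (tm (j + Suc k))\<bar> \<le> (1/2)^j" for j
  proof -
    let ?i = "j + Suc k"
    have "\<bar>T n (tm ?i)\<bar> \<le> Bf n * (\<integral>x. \<bar>tm ?i x\<bar> \<partial>M)"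
      unfolding T_def by (rule dual_bound[OF fm Bf tmi])
    also have "\<dots> \<le> Bf n * eps ?i" using tm1[of ?i] Bf1[of n] by (simp add: mult_left_mono)
    also have "\<dots> \<le> E ?i * eps ?i" using BE[of k ?i] eps_pos[of ?i] by (simp add: n_def mult_right_mono)
    also have "\<dots> = (1/2)^Suc ?i" using E1[of ?i] by (simp add: eps_def)
    also have "\<dots> \<le> (1/2)^j" by (rule power_decreasing) auto
    finally show ?thesis .
  qed
  have tail: "\<bar>\<Sum>j. T n (tm (j + Suc k))\<bar> \<le> 2"
  proof -
    have "norm (\<Sum>j. T n (tm (j + Suc k))) \<le> (\<Sum>j. (1/2::real)^j)"
      by (rule norm_suminf_le) (use tail_bd in auto)
    also have "(\<Sum>j. (1/2::real)^j) = 2" using suminf_geometric[of "1/2::real"] by simp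
    finally show ?thesis by simp
  qed
  have "\<bar>T n F\<bar> \<ge> real k + 1" using split hk tail by linarith
  then show False using K[of n] kK by linarith
qed

lemma K_meas_pair:
  fixes K :: "real \<Rightarrow> real \<Rightarrow> real"
  assumes Km: "(\<lambda>z. K (fst z) (snd z)) \<in> borel_measurable borel"
  shows "(\<lambda>z. K (fst z) (snd z)) \<in> borel_measurable (lebesgue \<Otimes>\<^sub>M lebesgue)"
proof -
  have "(\<lambda>z. (fst z, snd z)) \<in> (lebesgue \<Otimes>\<^sub>M lebesgue) \<rightarrow>\<^sub>M (borel \<Otimes>\<^sub>M borel :: (real \<times> real) measure)"
  proof (rule measurable_Pair)
    show "fst \<in> (lebesgue \<Otimes>\<^sub>M lebesgue) \<rightarrow>\<^sub>M (borel :: real measure)"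
      by (rule measurable_compose[OF measurable_fst]) (simp add: measurable_completion measurable_lborel1)
    show "snd \<in> (lebesgue \<Otimes>\<^sub>M lebesgue) \<rightarrow>\<^sub>M (borel :: real measure)"
      by (rule measurable_compose[OF measurable_snd]) (simp add: measurable_completion measurable_lborel1)
  qed
  then have "(\<lambda>z. z) \<in> (lebesgue \<Otimes>\<^sub>M lebesgue) \<rightarrow>\<^sub>M (borel :: (real \<times> real) measure)"
    by (simp add: borel_prod)
  from measurable_compose[OF this Km] show ?thesis by simp
qed

lemma K_meas_sec:
  fixes K :: "real \<Rightarrow> real \<Rightarrow> real"
  assumes Km: "(\<lambda>z. K (fst z) (snd z)) \<in> borel_measurable borel"
  shows "K a \<in> borel_measurable lebesgue"
proof -
  have "(\<lambda>b. (a, b)) \<in> (lebesgue :: real measure) \<rightarrow>\<^sub>M (borel :: (real \<times> real) measure)"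
    by (intro measurable_completion) (simp add: measurable_lborel1)
  from measurable_compose[OF this Km] show ?thesis by simp
qed


lemma bdd_integrable_S:
  fixes f :: "real \<Rightarrow> real"
  assumes "f \<in> borel_measurable lebesgue" "AE x in lebesgue. \<bar>f x\<bar> \<le> M" "\<And>x. x \<notin> {0..<pi} \<Longrightarrow> f x = 0"
  shows "integrable lebesgue f"
  by (rule integrableI_bounded_set[where A="{0..<pi}" and B=M]) (use assms in \<open>auto elim!: eventually_mono\<close>)

lemma bilinear_conv:
  fixes K :: "real \<Rightarrow> real \<Rightarrow> real" and f g :: "nat \<Rightarrow> real \<Rightarrow> real" and f0 g0 :: "real \<Rightarrow> real"
  assumes Km: "(\<lambda>z. K (fst z) (snd z)) \<in> borel_measurable borel" and Kb: "\<And>a b. \<bar>K a b\<bar> \<le> CK"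
   and fm: "\<And>n. f n \<in> borel_measurable lebesgue" and gm: "\<And>n. g n \<in> borel_measurable lebesgue"
   and f0m: "f0 \<in> borel_measurable lebesgue" and g0m: "g0 \<in> borel_measurable lebesgue"
   and M0: "M \<ge> 0"
   and fb: "\<And>n. AE x in lebesgue. \<bar>f n x\<bar> \<le> M" and gb: "\<And>n. AE x in lebesgue. \<bar>g n x\<bar> \<le> M"
   and f0b: "AE x in lebesgue. \<bar>f0 x\<bar> \<le> M" and g0b: "AE x in lebesgue. \<bar>g0 x\<bar> \<le> M"
   and fz: "\<And>n x. x \<notin> {0..<pi} \<Longrightarrow> f n x = 0" and gz: "\<And>n x. x \<notin> {0..<pi} \<Longrightarrow> g n x = 0"
   and f0z: "\<And>x. x \<notin> {0..<pi} \<Longrightarrow> f0 x = 0" and g0z: "\<And>x. x \<notin> {0..<pi} \<Longrightarrow> g0 x = 0"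
   and convf: "\<And>h. integrable lebesgue h \<Longrightarrow>
      (\<lambda>n. \<integral>x. f n x * h x \<partial>lebesgue) \<longlonglongrightarrow> (\<integral>x. f0 x * h x \<partial>lebesgue)"
   and convg: "\<And>h. integrable lebesgue h \<Longrightarrow>
      (\<lambda>n. \<integral>x. g n x * h x \<partial>lebesgue) \<longlonglongrightarrow> (\<integral>x. g0 x * h x \<partial>lebesgue)"
  shows "(\<lambda>n. \<integral>a. f n a * (\<integral>b. K a b * g n b \<partial>lebesgue) \<partial>lebesgue)
     \<longlonglongrightarrow> (\<integral>a. f0 a * (\<integral>b. K a b * g0 b \<partial>lebesgue) \<partial>lebesgue)"
proof -
  define S where "S = {0..<pi::real}"
  have S[measurable]: "S \<in> sets lebesgue" by (simp add: S_def)
  have mS: "measure lebesgue S = pi" by (simp add: S_def)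
  have eS: "emeasure lebesgue S < \<infinity>" by (simp add: S_def)
  interpret L: sigma_finite_measure "lebesgue :: real measure" by (rule sf_lebesgue)
  have CK0: "CK \<ge> 0" using Kb[of 0 0] by linarith
  have Ksec[measurable]: "K a \<in> borel_measurable lebesgue" for a by (rule K_meas_sec[OF Km])
  define kk where "kk a b = indicator S b * K a b" for a b
  have kki: "integrable lebesgue (kk a)" for a
    unfolding kk_def[abs_def]
    by (rule integrableI_bounded_set[where A=S and B=CK]) (use Kb eS in \<open>auto simp: indicator_def\<close>)
  have kkabs: "(\<integral>b. \<bar>kk a b\<bar> \<partial>lebesgue) \<le> CK * pi" for a
  proof -
    have "(\<integral>b. \<bar>kk a b\<bar> \<partial>lebesgue) \<le> (\<integral>b. indicator S b * CK \<partial>lebesgue)"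
    proof (rule integral_mono)
      show "integrable lebesgue (\<lambda>b. \<bar>kk a b\<bar>)" using integrable_abs[OF kki[of a]] .
      show "integrable lebesgue (\<lambda>b. indicator S b * CK)"
        by (rule integrableI_bounded_set[where A=S and B=CK]) (use eS CK0 in \<open>auto simp: indicator_def\<close>)
      show "\<bar>kk a b\<bar> \<le> indicator S b * CK" for b using Kb[of a b] by (auto simp: kk_def indicator_def)
    qed
    also have "\<dots> = CK * pi" using eS mS by simp
    finally show ?thesis .
  qed
  define H where "H n a = (\<integral>b. K a b * g n b \<partial>lebesgue)" for n a
  define H0 where "H0 a = (\<integral>b. K a b * g0 b \<partial>lebesgue)" for a
  have Hkk: "H n a = (\<integral>b. g n b * kk a b \<partial>lebesgue)" for n a
    unfolding H_def by (rule Bochner_Integration.integral_cong) (use gz in \<open>auto simp: kk_def indicator_def S_def\<close>)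
  have H0kk: "H0 a = (\<integral>b. g0 b * kk a b \<partial>lebesgue)" for a
    unfolding H0_def by (rule Bochner_Integration.integral_cong) (use g0z in \<open>auto simp: kk_def indicator_def S_def\<close>)
  have Hm[measurable]: "H n \<in> borel_measurable lebesgue" for n
  proof -
    have "(\<lambda>z. K (fst z) (snd z) * g n (snd z)) \<in> borel_measurable (lebesgue \<Otimes>\<^sub>M lebesgue)"
      using K_meas_pair[OF Km] gm[of n] by measurable
    then show ?thesis unfolding H_def[abs_def]
      by (intro L.borel_measurable_lebesgue_integral) (simp add: case_prod_beta)
  qed
  have H0m[measurable]: "H0 \<in> borel_measurable lebesgue"
  proof -
    have "(\<lambda>z. K (fst z) (snd z) * g0 (snd z)) \<in> borel_measurable (lebesgue \<Otimes>\<^sub>M lebesgue)"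
      using K_meas_pair[OF Km] g0m by measurable
    then show ?thesis unfolding H0_def[abs_def]
      by (intro L.borel_measurable_lebesgue_integral) (simp add: case_prod_beta)
  qed
  have Hb: "\<bar>H n a\<bar> \<le> M * (CK * pi)" for n a
    unfolding Hkk using dual_bound[OF gm gb kki, of n a] kkabs[of a] M0
    by (meson mult_left_mono order_trans)
  have H0b: "\<bar>H0 a\<bar> \<le> M * (CK * pi)" for a
    unfolding H0kk using dual_bound[OF g0m g0b kki, of a] kkabs[of a] M0
    by (meson mult_left_mono order_trans)
  have Hlim: "(\<lambda>n. H n a) \<longlonglongrightarrow> H0 a" for a
    unfolding Hkk H0kk by (rule convg[OF kki])
  define s where "s n a = indicator S a * \<bar>H n a - H0 a\<bar>" for n a
  have s_lim: "(\<lambda>n. \<integral>a. s n a \<partial>lebesgue) \<longlonglongrightarrow> (\<integral>a. 0 \<partial>(lebesgue :: real measure))"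
  proof (rule Bochner_Integration.integral_dominated_convergence[where w="\<lambda>a. indicator S a * (2 * (M * (CK * pi)))"])
    show "(\<lambda>a. 0::real) \<in> borel_measurable lebesgue" by simp
    show "s n \<in> borel_measurable lebesgue" for n unfolding s_def[abs_def] by measurable
    show "integrable lebesgue (\<lambda>a. indicator S a * (2 * (M * (CK * pi))))"
      by (rule integrableI_bounded_set[where A=S and B="2 * (M * (CK * pi))"]) (use eS CK0 M0 in \<open>auto simp: indicator_def\<close>)
    show "AE a in lebesgue. (\<lambda>n. s n a) \<longlonglongrightarrow> 0"
    proof (intro AE_I2)
      fix a
      have "(\<lambda>n. \<bar>H n a - H0 a\<bar>) \<longlonglongrightarrow> \<bar>H0 a - H0 a\<bar>"
        by (intro tendsto_intros Hlim)
      then have "(\<lambda>n. indicator S a * \<bar>H n a - H0 a\<bar>) \<longlonglongrightarrow> indicator S a * 0"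
        by (intro tendsto_intros) simp
      then show "(\<lambda>n. s n a) \<longlonglongrightarrow> 0" by (simp add: s_def)
    qed
    show "AE a in lebesgue. norm (s n a) \<le> indicator S a * (2 * (M * (CK * pi)))" for n
    proof (intro AE_I2)
      fix a
      have "\<bar>H n a - H0 a\<bar> \<le> 2 * (M * (CK * pi))" using Hb[of n a] H0b[of a] by linarith
      then show "norm (s n a) \<le> indicator S a * (2 * (M * (CK * pi)))"
        by (auto simp: s_def indicator_def)
    qed
  qed
  then have s_lim0: "(\<lambda>n. \<integral>a. s n a \<partial>lebesgue) \<longlonglongrightarrow> 0" by simp
  have fz': "f n a * c = f n a * (indicator S a * c)" for n a c
    using fz[of a n] by (auto simp: indicator_def S_def)
  have f0z': "f0 a * c = f0 a * (indicator S a * c)" for a c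
    using f0z[of a] by (auto simp: indicator_def S_def)
  have fi: "integrable lebesgue (f n)" for n by (rule bdd_integrable_S[OF fm fb fz])
  have f0i: "integrable lebesgue f0" by (rule bdd_integrable_S[OF f0m f0b f0z])
  have HfI: "integrable lebesgue (\<lambda>a. f n a * H n a)" for n
    using integrable_bdd_mult[OF Hm[of n] AE_I2[OF Hb[of n]] fi[of n]] by (simp add: mult.commute)
  have H0fI: "integrable lebesgue (\<lambda>a. f n a * H0 a)" for n
    using integrable_bdd_mult[OF H0m AE_I2[OF H0b] fi[of n]] by (simp add: mult.commute)
  have dI: "integrable lebesgue (\<lambda>a. indicator S a * (H n a - H0 a))" for n
  proof (rule integrableI_bounded_set[where A=S and B="2 * (M * (CK * pi))"])
    have "\<bar>H n a - H0 a\<bar> \<le> 2 * (M * (CK * pi))" for a using Hb[of n a] H0b[of a] by linarith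
    then show "AE x in lebesgue. x \<in> S \<longrightarrow> norm (indicator S x * (H n x - H0 x)) \<le> 2 * (M * (CK * pi))"
      by (intro AE_I2) (auto simp: indicator_def)
    show "AE x in lebesgue. x \<notin> S \<longrightarrow> indicator S x * (H n x - H0 x) = 0" by (intro AE_I2) auto
  qed (use eS in auto)
  have H0I: "integrable lebesgue (\<lambda>a. indicator S a * H0 a)"
  proof (rule integrableI_bounded_set[where A=S and B="M * (CK * pi)"])
    show "AE x in lebesgue. x \<in> S \<longrightarrow> norm (indicator S x * H0 x) \<le> M * (CK * pi)"
      using H0b by (intro AE_I2) (auto simp: indicator_def)
    show "AE x in lebesgue. x \<notin> S \<longrightarrow> indicator S x * H0 x = 0" by (intro AE_I2) auto
  qed (use eS in auto)
  have bnd: "norm ((\<integral>a. f n a * H n a \<partial>lebesgue) - (\<integral>a. f n a * H0 a \<partial>lebesgue))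
      \<le> M * (\<integral>a. s n a \<partial>lebesgue)" for n
  proof -
    have "(\<integral>a. f n a * H n a \<partial>lebesgue) - (\<integral>a. f n a * H0 a \<partial>lebesgue)
        = (\<integral>a. f n a * H n a - f n a * H0 a \<partial>lebesgue)"
      using HfI H0fI by (simp add: Bochner_Integration.integral_diff)
    also have "\<dots> = (\<integral>a. f n a * (indicator S a * (H n a - H0 a)) \<partial>lebesgue)"
      by (rule Bochner_Integration.integral_cong) (auto simp: fz'[symmetric] right_diff_distrib)
    finally have eq: "(\<integral>a. f n a * H n a \<partial>lebesgue) - (\<integral>a. f n a * H0 a \<partial>lebesgue)
        = (\<integral>a. f n a * (indicator S a * (H n a - H0 a)) \<partial>lebesgue)" .
    have "\<bar>\<integral>a. f n a * (indicator S a * (H n a - H0 a)) \<partial>lebesgue\<bar>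
       \<le> M * (\<integral>a. \<bar>indicator S a * (H n a - H0 a)\<bar> \<partial>lebesgue)"
      by (rule dual_bound[OF fm fb dI])
    also have "(\<integral>a. \<bar>indicator S a * (H n a - H0 a)\<bar> \<partial>lebesgue) = (\<integral>a. s n a \<partial>lebesgue)"
      by (rule Bochner_Integration.integral_cong) (auto simp: s_def indicator_def)
    finally show ?thesis using eq by simp
  qed
  have lim1: "(\<lambda>n. (\<integral>a. f n a * H n a \<partial>lebesgue) - (\<integral>a. f n a * H0 a \<partial>lebesgue)) \<longlonglongrightarrow> 0"
  proof (rule Lim_null_comparison[OF _ tendsto_mult_right_zero[OF s_lim0, of M]])
    show "\<forall>\<^sub>F n in sequentially. norm ((\<integral>a. f n a * H n a \<partial>lebesgue) - (\<integral>a. f n a * H0 a \<partial>lebesgue))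
      \<le> M * (\<integral>a. s n a \<partial>lebesgue)" using bnd by simp
  qed
  have lim2: "(\<lambda>n. \<integral>a. f n a * H0 a \<partial>lebesgue) \<longlonglongrightarrow> (\<integral>a. f0 a * H0 a \<partial>lebesgue)"
  proof -
    have "(\<lambda>n. \<integral>a. f n a * (indicator S a * H0 a) \<partial>lebesgue) \<longlonglongrightarrow> (\<integral>a. f0 a * (indicator S a * H0 a) \<partial>lebesgue)"
      by (rule convf[OF H0I])
    then show ?thesis by (simp add: fz'[symmetric] f0z'[symmetric])
  qed
  have "(\<lambda>n. ((\<integral>a. f n a * H n a \<partial>lebesgue) - (\<integral>a. f n a * H0 a \<partial>lebesgue)) + (\<integral>a. f n a * H0 a \<partial>lebesgue))
     \<longlonglongrightarrow> 0 + (\<integral>a. f0 a * H0 a \<partial>lebesgue)"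
    by (rule tendsto_add[OF lim1 lim2])
  then show ?thesis by (simp add: H_def H0_def)
qed

lemma complete_AE_meas:
  fixes f g :: "'a \<Rightarrow> real"
  assumes g: "g \<in> borel_measurable (completion M)" and ae: "AE x in completion M. f x = g x"
  shows "f \<in> borel_measurable (completion M)"
proof (rule borel_measurableI)
  fix U :: "real set" assume "open U"
  then have U: "g -` U \<inter> space (completion M) \<in> sets (completion M)"
    using g by (intro measurable_sets[OF g]) auto
  have "AE x in completion M. x \<in> g -` U \<inter> space (completion M) \<longleftrightarrow> x \<in> f -` U \<inter> space (completion M)"
    using ae by eventually_elim auto
  then show "f -` U \<inter> space (completion M) \<in> sets (completion M)"
    using U by (rule completion.in_sets_AE) auto
qed

lemma H_meas:
  fixes K :: "real \<Rightarrow> real \<Rightarrow> real"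
  assumes Km: "(\<lambda>z. K (fst z) (snd z)) \<in> borel_measurable borel" and gm: "g \<in> borel_measurable lebesgue"
  shows "(\<lambda>a. \<integral>b. K a b * g b \<partial>lebesgue) \<in> borel_measurable lebesgue"
proof -
  interpret L: sigma_finite_measure "lebesgue :: real measure" by (rule sf_lebesgue)
  have "(\<lambda>z. K (fst z) (snd z) * g (snd z)) \<in> borel_measurable (lebesgue \<Otimes>\<^sub>M lebesgue)"
    using K_meas_pair[OF Km] gm by measurable
  then show ?thesis
    by (intro L.borel_measurable_lebesgue_integral) (simp add: case_prod_beta)
qed

lemma omega_decomp:
  fixes K :: "real \<Rightarrow> real \<Rightarrow> real" and p :: "real \<Rightarrow> real \<Rightarrow> real" and \<gamma> :: "real \<Rightarrow> real \<times> real"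
    and u1 u2 :: "real \<Rightarrow> real"
  assumes Km: "(\<lambda>z. K (fst z) (snd z)) \<in> borel_measurable borel" and Kb: "\<And>a b. \<bar>K a b\<bar> \<le> CK"
    and K0: "\<And>a b. b < a \<Longrightarrow> K a b = 0"
    and pK: "AE a in lebesgue. AE b in lebesgue. a \<le> b \<longrightarrow> p a b = K a b"
    and u1: "u1 = (\<lambda>a. indicator {0..<pi} a * fst (\<gamma> a))" and u2: "u2 = (\<lambda>a. indicator {0..<pi} a * snd (\<gamma> a))"
    and u1m: "u1 \<in> borel_measurable lebesgue" and u2m: "u2 \<in> borel_measurable lebesgue"
    and u1b: "AE x in lebesgue. \<bar>u1 x\<bar> \<le> M" and u2b: "AE x in lebesgue. \<bar>u2 x\<bar> \<le> M"
  shows "omega_p p \<gamma> = (\<integral>a. u1 a * (\<integral>b. K a b * u2 b \<partial>lebesgue) \<partial>lebesgue)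
                        - (\<integral>a. u2 a * (\<integral>b. K a b * u1 b \<partial>lebesgue) \<partial>lebesgue)"
proof -
  define S where "S = {0..<pi::real}"
  have eS: "emeasure lebesgue S < \<infinity>" by (simp add: S_def)
  have u1z: "\<And>x. x \<notin> {0..<pi} \<Longrightarrow> u1 x = 0" and u2z: "\<And>x. x \<notin> {0..<pi} \<Longrightarrow> u2 x = 0"
    by (simp_all add: u1 u2)
  define H1 where "H1 a = (\<integral>b. K a b * u1 b \<partial>lebesgue)" for a
  define H2 where "H2 a = (\<integral>b. K a b * u2 b \<partial>lebesgue)" for a
  have H1m: "H1 \<in> borel_measurable lebesgue" unfolding H1_def by (rule H_meas[OF Km u1m])
  have H2m: "H2 \<in> borel_measurable lebesgue" unfolding H2_def by (rule H_meas[OF Km u2m])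
  have Ksec[measurable]: "K a \<in> borel_measurable lebesgue" for a by (rule K_meas_sec[OF Km])
  have Ku1I: "integrable lebesgue (\<lambda>b. K a b * u1 b)" for a
    using integrable_bdd_mult[OF Ksec AE_I2[OF Kb] bdd_integrable_S[OF u1m u1b u1z]] .
  have Ku2I: "integrable lebesgue (\<lambda>b. K a b * u2 b)" for a
    using integrable_bdd_mult[OF Ksec AE_I2[OF Kb] bdd_integrable_S[OF u2m u2b u2z]] .
  define I where "I \<alpha> = (LINT \<beta>:{\<alpha>..<pi}|lebesgue. p \<alpha> \<beta> * cross2 (\<gamma> \<alpha>) (\<gamma> \<beta>))" for \<alpha>
  define G where "G \<alpha> = u1 \<alpha> * H2 \<alpha> - u2 \<alpha> * H1 \<alpha>" for \<alpha>
  have Gm: "G \<in> borel_measurable lebesgue" unfolding G_def using u1m u2m H1m H2m by measurable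
  have IG: "AE \<alpha> in lebesgue. indicator S \<alpha> * I \<alpha> = G \<alpha>"
    using pK
  proof eventually_elim
    case (elim \<alpha>)
    show ?case
    proof (cases "\<alpha> \<in> S")
      case False
      then show ?thesis by (simp add: G_def u1 u2 S_def)
    next
      case True
      define J where "J \<beta> = K \<alpha> \<beta> * (u1 \<alpha> * u2 \<beta> - u2 \<alpha> * u1 \<beta>)" for \<beta>
      have Jm: "J \<in> borel_measurable lebesgue" unfolding J_def using u1m u2m by measurable
      have Jint: "(\<integral>\<beta>. J \<beta> \<partial>lebesgue) = G \<alpha>"
      proof -
        have "(\<integral>\<beta>. J \<beta> \<partial>lebesgue) = (\<integral>\<beta>. u1 \<alpha> * (K \<alpha> \<beta> * u2 \<beta>) - u2 \<alpha> * (K \<alpha> \<beta> * u1 \<beta>) \<partial>lebesgue)"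
          by (simp add: J_def algebra_simps)
        also have "\<dots> = u1 \<alpha> * H2 \<alpha> - u2 \<alpha> * H1 \<alpha>"
          using Ku1I[of \<alpha>] Ku2I[of \<alpha>] by (simp add: H1_def H2_def)
        finally show ?thesis by (simp add: G_def)
      qed
      have ae2: "AE \<beta> in lebesgue. indicator {\<alpha>..<pi} \<beta> * (p \<alpha> \<beta> * cross2 (\<gamma> \<alpha>) (\<gamma> \<beta>)) = J \<beta>"
        using elim
      proof eventually_elim
        case (elim \<beta>)
        show ?case
        proof (cases "\<beta> < \<alpha>")
          case True
          then show ?thesis by (simp add: J_def K0)
        next
          case False
          show ?thesis
          proof (cases "\<beta> < pi")
            case True
            then have "\<beta> \<in> {0..<pi}" "\<alpha> \<in> {0..<pi}" using False \<open>\<alpha> \<in> S\<close> by (auto simp: S_def)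
            then show ?thesis using elim False True
              by (simp add: J_def u1 u2 cross2_def algebra_simps)
          next
            case False
            then show ?thesis by (simp add: J_def u1 u2)
          qed
        qed
      qed
      have "I \<alpha> = (\<integral>\<beta>. indicator {\<alpha>..<pi} \<beta> * (p \<alpha> \<beta> * cross2 (\<gamma> \<alpha>) (\<gamma> \<beta>)) \<partial>lebesgue)"
        by (simp add: I_def set_lebesgue_integral_def)
      also have "\<dots> = (\<integral>\<beta>. J \<beta> \<partial>lebesgue)"
      proof (rule integral_cong_AE)
        show "(\<lambda>\<beta>. indicator {\<alpha>..<pi} \<beta> * (p \<alpha> \<beta> * cross2 (\<gamma> \<alpha>) (\<gamma> \<beta>))) \<in> borel_measurable lebesgue"
          by (rule complete_AE_meas[OF Jm ae2])
      qed (use Jm ae2 in auto)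
      finally show ?thesis using True Jint by simp
    qed
  qed
  have "omega_p p \<gamma> = (\<integral>\<alpha>. indicator S \<alpha> * I \<alpha> \<partial>lebesgue)"
    by (simp add: omega_p_def I_def S_def set_lebesgue_integral_def)
  also have "\<dots> = (\<integral>\<alpha>. G \<alpha> \<partial>lebesgue)"
    by (rule integral_cong_AE[OF complete_AE_meas[OF Gm IG] Gm IG])
  also have "\<dots> = (\<integral>a. u1 a * H2 a \<partial>lebesgue) - (\<integral>a. u2 a * H1 a \<partial>lebesgue)"
  proof -
    have H1b: "\<bar>H1 a\<bar> \<le> CK * (\<integral>b. \<bar>u1 b\<bar> \<partial>lebesgue)" for a
    proof -
      have "\<bar>H1 a\<bar> \<le> (\<integral>b. \<bar>K a b * u1 b\<bar> \<partial>lebesgue)" unfolding H1_def by (rule integral_abs_bound)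
      also have "\<dots> \<le> (\<integral>b. CK * \<bar>u1 b\<bar> \<partial>lebesgue)"
        using integrable_abs[OF Ku1I[of a]] integrable_abs[OF bdd_integrable_S[OF u1m u1b u1z]] Kb
        by (intro integral_mono) (auto simp: abs_mult intro: mult_right_mono)
      also have "\<dots> = CK * (\<integral>b. \<bar>u1 b\<bar> \<partial>lebesgue)" by simp
      finally show ?thesis .
    qed
    have H2b: "\<bar>H2 a\<bar> \<le> CK * (\<integral>b. \<bar>u2 b\<bar> \<partial>lebesgue)" for a
    proof -
      have "\<bar>H2 a\<bar> \<le> (\<integral>b. \<bar>K a b * u2 b\<bar> \<partial>lebesgue)" unfolding H2_def by (rule integral_abs_bound)
      also have "\<dots> \<le> (\<integral>b. CK * \<bar>u2 b\<bar> \<partial>lebesgue)"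
        using integrable_abs[OF Ku2I[of a]] integrable_abs[OF bdd_integrable_S[OF u2m u2b u2z]] Kb
        by (intro integral_mono) (auto simp: abs_mult intro: mult_right_mono)
      also have "\<dots> = CK * (\<integral>b. \<bar>u2 b\<bar> \<partial>lebesgue)" by simp
      finally show ?thesis .
    qed
    have "integrable lebesgue (\<lambda>a. u1 a * H2 a)"
      using integrable_bdd_mult[OF H2m AE_I2[OF H2b] bdd_integrable_S[OF u1m u1b u1z]] by (simp add: mult.commute)
    moreover have "integrable lebesgue (\<lambda>a. u2 a * H1 a)"
      using integrable_bdd_mult[OF H1m AE_I2[OF H1b] bdd_integrable_S[OF u2m u2b u2z]] by (simp add: mult.commute)
    ultimately show ?thesis unfolding G_def by (rule Bochner_Integration.integral_diff)
  qed
  finally show ?thesis by (simp add: H1_def H2_def)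
qed

lemma comp_facts:
  fixes g :: "real \<Rightarrow> real \<times> real"
  assumes L: "Linf_0pi g"
  shows "(\<lambda>a. indicator {0..<pi} a * fst (g a)) \<in> borel_measurable lebesgue"
    "(\<lambda>a. indicator {0..<pi} a * snd (g a)) \<in> borel_measurable lebesgue"
    "\<exists>C. AE x in lebesgue. \<bar>indicator {0..<pi} x * fst (g x)\<bar> \<le> C"
    "\<exists>C. AE x in lebesgue. \<bar>indicator {0..<pi} x * snd (g x)\<bar> \<le> C"
proof -
  have m: "(\<lambda>x. indicator {0..<pi} x *\<^sub>R g x) \<in> borel_measurable lebesgue"
    using L unfolding Linf_0pi_def set_borel_measurable_def by blast
  obtain C where C: "AE x in lebesgue. x \<in> {0..<pi} \<longrightarrow> norm (g x) \<le> C"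
    using L unfolding Linf_0pi_def by blast
  have fm: "(fst :: real\<times>real \<Rightarrow> real) \<in> borel_measurable borel" by (intro borel_measurable_continuous_onI continuous_intros)
  have sm: "(snd :: real\<times>real \<Rightarrow> real) \<in> borel_measurable borel" by (intro borel_measurable_continuous_onI continuous_intros)
  have "(\<lambda>x. fst (indicator {0..<pi} x *\<^sub>R g x)) \<in> borel_measurable lebesgue"
    using measurable_compose[OF m fm] by (simp add: o_def)
  then show "(\<lambda>a. indicator {0..<pi} a * fst (g a)) \<in> borel_measurable lebesgue" by simp
  have "(\<lambda>x. snd (indicator {0..<pi} x *\<^sub>R g x)) \<in> borel_measurable lebesgue"
    using measurable_compose[OF m sm] by (simp add: o_def)
  then show "(\<lambda>a. indicator {0..<pi} a * snd (g a)) \<in> borel_measurable lebesgue" by simp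
  have "AE x in lebesgue. \<bar>indicator {0..<pi} x * fst (g x)\<bar> \<le> \<bar>C\<bar>"
    using C
  proof eventually_elim
    case (elim x)
    have "\<bar>fst (g x)\<bar> \<le> norm (g x)" by (metis norm_fst_le real_norm_def surjective_pairing)
    then show ?case using elim by (auto simp: indicator_def)
  qed
  then show "\<exists>C. AE x in lebesgue. \<bar>indicator {0..<pi} x * fst (g x)\<bar> \<le> C" by blast
  have "AE x in lebesgue. \<bar>indicator {0..<pi} x * snd (g x)\<bar> \<le> \<bar>C\<bar>"
    using C
  proof eventually_elim
    case (elim x)
    have "\<bar>snd (g x)\<bar> \<le> norm (g x)" by (metis norm_snd_le real_norm_def surjective_pairing)
    then show ?case using elim by (auto simp: indicator_def)
  qed
  then show "\<exists>C. AE x in lebesgue. \<bar>indicator {0..<pi} x * snd (g x)\<bar> \<le> C" by blast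
qed

lemma comp_conv:
  assumes W: "weak_star_conv_0pi gs g0" and h: "integrable lebesgue h"
  shows "(\<lambda>n. \<integral>x. (indicator {0..<pi} x * gs n x) * h x \<partial>lebesgue)
     \<longlonglongrightarrow> (\<integral>x. (indicator {0..<pi} x * g0 x) * h x \<partial>lebesgue)"
proof -
  have "set_integrable lebesgue {0..<pi} h"
    unfolding set_integrable_def by (rule integrable_mult_indicator) (use h in auto)
  then have "(\<lambda>n. LINT x:{0..<pi}|lebesgue. gs n x * h x) \<longlonglongrightarrow> (LINT x:{0..<pi}|lebesgue. g0 x * h x)"
    using W unfolding weak_star_conv_0pi_def by blast
  then show ?thesis by (simp add: set_lebesgue_integral_def mult.assoc)
qed


theorem lemma4p1:
  fixes p :: "real \<Rightarrow> real \<Rightarrow> real"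
    and \<gamma>s :: "nat \<Rightarrow> real \<Rightarrow> real \<times> real"
    and \<gamma> :: "real \<Rightarrow> real \<times> real"
  assumes p_meas: "(\<lambda>(a, b). p a b) \<in> borel_measurable (lebesgue :: (real \<times> real) measure)"
    and p_pos: "AE x in (lebesgue :: (real \<times> real) measure). p (fst x) (snd x) > 0"
    and p_sym: "\<And>a b. p a b = p b a"
    and p_per: "\<And>a b. p (a + pi) b = p a b \<and> p a (b + pi) = p a b"
    and p_bdd: "\<exists>C. AE x in (lebesgue :: (real \<times> real) measure). \<bar>p (fst x) (snd x)\<bar> \<le> C"
    and \<gamma>s_Linf: "\<And>n. Linf_0pi (\<gamma>s n)"
    and \<gamma>_Linf: "Linf_0pi \<gamma>"
    and conv1: "weak_star_conv_0pi (\<lambda>n x. fst (\<gamma>s n x)) (\<lambda>x. fst (\<gamma> x))"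
    and conv2: "weak_star_conv_0pi (\<lambda>n x. snd (\<gamma>s n x)) (\<lambda>x. snd (\<gamma> x))"
  shows "(\<lambda>n. omega_p p (\<gamma>s n)) \<longlonglongrightarrow> omega_p p \<gamma>"
proof -
  define S where "S = {0..<pi::real}"
  have S[measurable]: "S \<in> sets lebesgue" by (simp add: S_def)
  have eS: "emeasure lebesgue S < \<infinity>" by (simp add: S_def)
  obtain p' where p'm: "p' \<in> borel_measurable (lborel :: (real \<times> real) measure)"
    and p'ae: "AE z in lborel. (\<lambda>(a, b). p a b) z = p' z"
    using completion_ex_borel_measurable_real[OF p_meas] by blast
  obtain C where C: "AE x in (lebesgue :: (real \<times> real) measure). \<bar>p (fst x) (snd x)\<bar> \<le> C"
    using p_bdd by blast
  then have Cb: "AE x in (lborel :: (real \<times> real) measure). \<bar>p (fst x) (snd x)\<bar> \<le> C"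
    by (simp add: AE_completion_iff)
  define q where "q z = (if \<bar>p' z\<bar> \<le> C then p' z else 0)" for z
  have p'b: "p' \<in> borel_measurable borel" using p'm by (simp add: measurable_lborel1)
  have qm: "q \<in> borel_measurable borel" unfolding q_def[abs_def] using p'b by measurable
  have qb: "\<bar>q z\<bar> \<le> \<bar>C\<bar>" for z by (simp add: q_def)
  have qae: "AE z in lborel. p (fst z) (snd z) = q z"
    using p'ae Cb by eventually_elim (auto simp: q_def case_prod_beta)
  then have "AE z in lborel \<Otimes>\<^sub>M lborel. p (fst z) (snd z) = q z" unfolding lborel_prod .
  then have "AE a in lborel. AE b in lborel. p a b = q (a, b)" using lborel_pair.AE_pair by fastforce
  define K where "K a b = (if a \<le> b then q (a, b) else 0)" for a b
  have pK: "AE a in lebesgue. AE b in lebesgue. a \<le> b \<longrightarrow> p a b = K a b"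
    using AE_completion[OF \<open>AE a in lborel. AE b in lborel. p a b = q (a, b)\<close>]
    by eventually_elim (auto simp: K_def AE_completion_iff elim!: eventually_mono)
  have Km: "(\<lambda>z. K (fst z) (snd z)) \<in> borel_measurable borel"
  proof -
    have cl: "{z::real\<times>real. fst z \<le> snd z} \<in> sets borel"
      by (intro borel_closed closed_Collect_le continuous_intros)
    have "(\<lambda>z. indicator {z::real\<times>real. fst z \<le> snd z} z * q z) \<in> borel_measurable borel"
      using cl qm by (intro borel_measurable_times borel_measurable_indicator)
    moreover have "(\<lambda>z. indicator {z::real\<times>real. fst z \<le> snd z} z * q z) = (\<lambda>z. K (fst z) (snd z))"
      by (auto simp: K_def indicator_def fun_eq_iff)
    ultimately show ?thesis by simp
  qed
  have Kb: "\<bar>K a b\<bar> \<le> \<bar>C\<bar>" for a b using qb by (simp add: K_def)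
  have K0: "K a b = 0" if "b < a" for a b using that by (simp add: K_def)
  define U1 where "U1 n a = indicator {0..<pi} a * fst (\<gamma>s n a)" for n a
  define U2 where "U2 n a = indicator {0..<pi} a * snd (\<gamma>s n a)" for n a
  define V1 where "V1 a = indicator {0..<pi} a * fst (\<gamma> a)" for a
  define V2 where "V2 a = indicator {0..<pi} a * snd (\<gamma> a)" for a
  have U1m: "U1 n \<in> borel_measurable lebesgue" for n
    unfolding U1_def[abs_def] using comp_facts(1)[OF \<gamma>s_Linf[of n]] by simp
  have U2m: "U2 n \<in> borel_measurable lebesgue" for n
    unfolding U2_def[abs_def] using comp_facts(2)[OF \<gamma>s_Linf[of n]] by simp
  have V1m: "V1 \<in> borel_measurable lebesgue"
    unfolding V1_def[abs_def] using comp_facts(1)[OF \<gamma>_Linf] by simp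
  have V2m: "V2 \<in> borel_measurable lebesgue"
    unfolding V2_def[abs_def] using comp_facts(2)[OF \<gamma>_Linf] by simp
  have U1z: "U1 n x = 0" if "x \<notin> {0..<pi}" for n x using that by (simp add: U1_def)
  have U2z: "U2 n x = 0" if "x \<notin> {0..<pi}" for n x using that by (simp add: U2_def)
  have V1z: "V1 x = 0" if "x \<notin> {0..<pi}" for x using that by (simp add: V1_def)
  have V2z: "V2 x = 0" if "x \<notin> {0..<pi}" for x using that by (simp add: V2_def)
  have cU1: "(\<lambda>n. \<integral>x. U1 n x * h x \<partial>lebesgue) \<longlonglongrightarrow> (\<integral>x. V1 x * h x \<partial>lebesgue)"
    if "integrable lebesgue h" for h
    using comp_conv[OF conv1 that] by (simp add: U1_def V1_def)
  have cU2: "(\<lambda>n. \<integral>x. U2 n x * h x \<partial>lebesgue) \<longlonglongrightarrow> (\<integral>x. V2 x * h x \<partial>lebesgue)"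
    if "integrable lebesgue h" for h
    using comp_conv[OF conv2 that] by (simp add: U2_def V2_def)
  have "\<exists>M. \<forall>n. AE x in lebesgue. \<bar>U1 n x\<bar> \<le> M"
  proof (rule unif_bound[OF S eS U1m])
    show "\<exists>B. AE x in lebesgue. \<bar>U1 n x\<bar> \<le> B" for n
      using comp_facts(3)[OF \<gamma>s_Linf[of n]] by (simp add: U1_def)
    show "\<forall>x\<in>space lebesgue. x \<notin> S \<longrightarrow> U1 n x = 0" for n using U1z by (simp add: S_def)
    show "Bseq (\<lambda>n. \<integral>x. U1 n x * h x \<partial>lebesgue)" if "integrable lebesgue h" for h
      using cU1[OF that] by (intro convergent_imp_Bseq convergentI)
  qed
  then obtain M1 where M1: "\<And>n. AE x in lebesgue. \<bar>U1 n x\<bar> \<le> M1" by blast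
  have "\<exists>M. \<forall>n. AE x in lebesgue. \<bar>U2 n x\<bar> \<le> M"
  proof (rule unif_bound[OF S eS U2m])
    show "\<exists>B. AE x in lebesgue. \<bar>U2 n x\<bar> \<le> B" for n
      using comp_facts(4)[OF \<gamma>s_Linf[of n]] by (simp add: U2_def)
    show "\<forall>x\<in>space lebesgue. x \<notin> S \<longrightarrow> U2 n x = 0" for n using U2z by (simp add: S_def)
    show "Bseq (\<lambda>n. \<integral>x. U2 n x * h x \<partial>lebesgue)" if "integrable lebesgue h" for h
      using cU2[OF that] by (intro convergent_imp_Bseq convergentI)
  qed
  then obtain M2 where M2: "\<And>n. AE x in lebesgue. \<bar>U2 n x\<bar> \<le> M2" by blast
  obtain M3 where M3: "AE x in lebesgue. \<bar>V1 x\<bar> \<le> M3"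
    using comp_facts(3)[OF \<gamma>_Linf] by (auto simp: V1_def)
  obtain M4 where M4: "AE x in lebesgue. \<bar>V2 x\<bar> \<le> M4"
    using comp_facts(4)[OF \<gamma>_Linf] by (auto simp: V2_def)
  define MM where "MM = \<bar>M1\<bar> + \<bar>M2\<bar> + \<bar>M3\<bar> + \<bar>M4\<bar>"
  have MM0: "MM \<ge> 0" by (simp add: MM_def)
  have U1b: "AE x in lebesgue. \<bar>U1 n x\<bar> \<le> MM" for n using M1[of n] by eventually_elim (auto simp: MM_def)
  have U2b: "AE x in lebesgue. \<bar>U2 n x\<bar> \<le> MM" for n using M2[of n] by eventually_elim (auto simp: MM_def)
  have V1b: "AE x in lebesgue. \<bar>V1 x\<bar> \<le> MM" using M3 by eventually_elim (auto simp: MM_def)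
  have V2b: "AE x in lebesgue. \<bar>V2 x\<bar> \<le> MM" using M4 by eventually_elim (auto simp: MM_def)
  have dec_n: "omega_p p (\<gamma>s n) = (\<integral>a. U1 n a * (\<integral>b. K a b * U2 n b \<partial>lebesgue) \<partial>lebesgue)
                        - (\<integral>a. U2 n a * (\<integral>b. K a b * U1 n b \<partial>lebesgue) \<partial>lebesgue)" for n
    by (rule omega_decomp[OF Km Kb K0 pK _ _ U1m U2m U1b U2b]) (simp_all add: U1_def U2_def fun_eq_iff)
  have dec: "omega_p p \<gamma> = (\<integral>a. V1 a * (\<integral>b. K a b * V2 b \<partial>lebesgue) \<partial>lebesgue)
                        - (\<integral>a. V2 a * (\<integral>b. K a b * V1 b \<partial>lebesgue) \<partial>lebesgue)"
    by (rule omega_decomp[OF Km Kb K0 pK _ _ V1m V2m V1b V2b]) (simp_all add: V1_def V2_def fun_eq_iff)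
  have l1: "(\<lambda>n. \<integral>a. U1 n a * (\<integral>b. K a b * U2 n b \<partial>lebesgue) \<partial>lebesgue)
      \<longlonglongrightarrow> (\<integral>a. V1 a * (\<integral>b. K a b * V2 b \<partial>lebesgue) \<partial>lebesgue)"
    by (rule bilinear_conv[OF Km Kb U1m U2m V1m V2m MM0 U1b U2b V1b V2b U1z U2z V1z V2z cU1 cU2])
  have l2: "(\<lambda>n. \<integral>a. U2 n a * (\<integral>b. K a b * U1 n b \<partial>lebesgue) \<partial>lebesgue)
      \<longlonglongrightarrow> (\<integral>a. V2 a * (\<integral>b. K a b * V1 b \<partial>lebesgue) \<partial>lebesgue)"
    by (rule bilinear_conv[OF Km Kb U2m U1m V2m V1m MM0 U2b U1b V2b V1b U2z U1z V2z V1z cU2 cU1])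
  show ?thesis unfolding dec_n dec by (rule tendsto_diff[OF l1 l2])
qed

end
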